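(* Let $n\ge 2$. Then $\mathrm{P}=\Gamma^{(0)}=\Gamma^{(1)}$, where $$\Gamma^{(j)}=\{T\in\mathrm{C}^\times:\ T\,\mathrm{C}^{(j)}\,T^{-1}\subseteq\mathrm{C}^{(j)}\},\quad j=0,1.$$ Explicitly, $\mathrm{P}=\mathrm{C}^{\times(0)}\cup\mathrm{C}^{\times(1)}$ if $n$ is even, and $\mathrm{P}=\mathrm{Z}^\times\,\mathrm{C}^{\times(0)}$ if $n$ is odd.
   Context: Let $\mathrm{C}$ be either the real Clifford algebra $C\ell_{p,q}$ with $p+q=n$, or the complex Clifford algebra $C\ell(\mathbb{C}^n)$. It has identity $e$ and generators $e_1,\dots,e_n$ satisfying $e_ae_b+e_be_a=2\eta_{ab}e$. In the real case $\eta=\mathrm{diag}(1,\dots,1,-1,\dots,-1)$ with $p$ entries $+1$ and $q$ entries $-1$. In the complex case $\eta=I_n$. $\mathrm{C}^k$ is the grade-$k$ subspace, spanned by the products $e_{a_1}\cdots e_{a_k}$ with $a_1<\dots<a_k$. The even subspace is $\mathrm{C}^{(0)}=\bigoplus_{k\text{ even}}\mathrm{C}^k$ and the odd subspace is $\mathrm{C}^{(1)}=\bigoplus_{k\text{ odd}}\mathrm{C}^k$. For $S\subseteq\mathrm{C}$, $S^\times$ is the set of elements of $S$ invertible in $\mathrm{C}$, and $\mathrm{C}^{\times(j)}:=(\mathrm{C}^{(j)})^\times$. $\mathrm{Z}$ is the center of $\mathrm{C}$: $\mathrm{Z}=\mathrm{C}^0$ for $n$ even and $\mathrm{Z}=\mathrm{C}^0\oplus\mathrm{C}^n$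 for $n$ odd. Define $$\mathrm{P}:=\mathrm{Z}^\times(\mathrm{C}^{\times(0)}\cup\mathrm{C}^{\times(1)})=\{WT:\ W\in\mathrm{Z}^\times,\ T\in\mathrm{C}^{\times(0)}\cup\mathrm{C}^{\times(1)}\}.$$ *)

theory Defs
  imports Complex_Main
begin

text \<open>Clifford algebra on generators e_0,...,e_(n-1) (0-based indexing of e_1..e_n)
 over a field 'a with diagonal metric given by sig (sig a = eta_aa).
 An element is a coefficient function on basis blades e_A, A a subset of {..<n};
 coefficients outside Pow {..<n} are zero.\<close>

type_synonym 'a clif = "nat set \<Rightarrow> 'a"

definition cl_carrier :: "nat \<Rightarrow> ('a::field) clif set" where
  "cl_carrier n = {x. \<forall>A. \<not> A \<subseteq> {..<n} \<longrightarrow> x A = 0}"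

text \<open>e_A e_B = blade_sign sig A B * e_(A symmetric-difference B), for A, B finite.\<close>
definition blade_sign :: "(nat \<Rightarrow> 'a::field) \<Rightarrow> nat set \<Rightarrow> nat set \<Rightarrow> 'a" where
  "blade_sign sig A B =
     (-1) ^ card {(a, b). a \<in> A \<and> b \<in> B \<and> b < a} * (\<Prod>a\<in>A \<inter> B. sig a)"

definition cl_mult :: "nat \<Rightarrow> (nat \<Rightarrow> 'a::field) \<Rightarrow> 'a clif \<Rightarrow> 'a clif \<Rightarrow> 'a clif" where
  "cl_mult n sig x y = (\<lambda>C. if C \<subseteq> {..<n}
      then (\<Sum>A\<in>Pow {..<n}. x A * y (A - C \<union> (C - A)) * blade_sign sig A (A - C \<union> (C - A)))
      else 0)"

definition cl_one :: "('a::field) clif" where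
  "cl_one = (\<lambda>C. if C = {} then 1 else 0)"

definition cl_gen :: "nat \<Rightarrow> ('a::field) clif" where
  "cl_gen a = (\<lambda>C. if C = {a} then 1 else 0)"

definition cl_grade :: "nat \<Rightarrow> nat \<Rightarrow> ('a::field) clif set" where
  "cl_grade n k = {x \<in> cl_carrier n. \<forall>A. x A \<noteq> 0 \<longrightarrow> card A = k}"

definition cl_par :: "nat \<Rightarrow> nat \<Rightarrow> ('a::field) clif set" where
  "cl_par n j = {x \<in> cl_carrier n. \<forall>A. x A \<noteq> 0 \<longrightarrow> card A mod 2 = j}"

definition cl_units :: "nat \<Rightarrow> (nat \<Rightarrow> 'a::field) \<Rightarrow> 'a clif set \<Rightarrow> 'a clif set" where
  "cl_units n sig S = {x \<in> S. \<exists>y \<in> cl_carrier n.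
       cl_mult n sig x y = cl_one \<and> cl_mult n sig y x = cl_one}"

definition cl_inv :: "nat \<Rightarrow> (nat \<Rightarrow> 'a::field) \<Rightarrow> 'a clif \<Rightarrow> 'a clif" where
  "cl_inv n sig x = (THE y. y \<in> cl_carrier n \<and>
       cl_mult n sig x y = cl_one \<and> cl_mult n sig y x = cl_one)"

definition cl_center :: "nat \<Rightarrow> (nat \<Rightarrow> 'a::field) \<Rightarrow> 'a clif set" where
  "cl_center n sig = {x \<in> cl_carrier n. \<forall>y \<in> cl_carrier n. cl_mult n sig x y = cl_mult n sig y x}"

definition cl_P :: "nat \<Rightarrow> (nat \<Rightarrow> 'a::field) \<Rightarrow> 'a clif set" where
  "cl_P n sig = {cl_mult n sig W T | W T. W \<in> cl_units n sig (cl_center n sig) \<and>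
       T \<in> cl_units n sig (cl_par n 0) \<union> cl_units n sig (cl_par n 1)}"

definition cl_Gamma :: "nat \<Rightarrow> (nat \<Rightarrow> 'a::field) \<Rightarrow> nat \<Rightarrow> 'a clif set" where
  "cl_Gamma n sig j = {T \<in> cl_units n sig (cl_carrier n).
       \<forall>X \<in> cl_par n j. cl_mult n sig (cl_mult n sig T X) (cl_inv n sig T) \<in> cl_par n j}"

definition cl_thm_concl :: "nat \<Rightarrow> (nat \<Rightarrow> 'a::field) \<Rightarrow> bool" where
  "cl_thm_concl n sig \<longleftrightarrow>
     cl_P n sig = cl_Gamma n sig 0 \<and> cl_P n sig = cl_Gamma n sig 1 \<and>
     (even n \<longrightarrow> cl_P n sig = cl_units n sig (cl_par n 0) \<union> cl_units n sig (cl_par n 1)) \<and>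
     (odd n \<longrightarrow> cl_P n sig = {cl_mult n sig W T | W T.
          W \<in> cl_units n sig (cl_center n sig) \<and> T \<in> cl_units n sig (cl_par n 0)})"

definition sig_pq :: "nat \<Rightarrow> nat \<Rightarrow> real" where
  "sig_pq p a = (if a < p then 1 else -1)"

end

theory Submission
  imports Defs
begin



definition sd :: "nat set \<Rightarrow> nat set \<Rightarrow> nat set" where "sd A B = A - B \<union> (B - A)"

lemma sd_simps[simp]: "sd A (sd A B) = B" "sd (sd A B) A = B" "sd (sd A B) B = A" "sd B (sd A B) = A"
  "sd {} B = B" "sd B {} = B" "sd B B = {}"
  by (auto simp: sd_def)
lemma sd_sd: "sd (sd A B) (sd A D) = sd B D" by (auto simp: sd_def)
lemma sd_sub: "A \<subseteq> N \<Longrightarrow> B \<subseteq> N \<Longrightarrow> sd A B \<subseteq> N" by (auto simp: sd_def)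
lemma sd_eq_iff: "(sd A D = C) = (A = sd C D)" by (auto simp: sd_def)
lemma sd_comm: "sd A B = sd B A" by (auto simp: sd_def)

lemma neg1_card: "finite U \<Longrightarrow> S \<subseteq> U \<Longrightarrow> (-1::'a::comm_ring_1)^card S = (\<Prod>p\<in>U. if p \<in> S then -1 else 1)"
proof -
  assume f: "finite U" and s: "S \<subseteq> U"
  have "(\<Prod>p\<in>U. if p \<in> S then -1 else (1::'a)) = prod (\<lambda>_. -1) (U \<inter> {p. p \<in> S}) * prod (\<lambda>_. 1) (U \<inter> - {p. p\<in>S})"
    using f by (rule prod.If_cases)
  also have "U \<inter> {p. p \<in> S} = S" using s by auto
  finally show ?thesis by simp
qed

definition ipr :: "nat set \<Rightarrow> nat set \<Rightarrow> nat set \<Rightarrow> 'a::comm_ring_1" where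
  "ipr N A B = (\<Prod>p\<in>N\<times>N. if fst p \<in> A \<and> snd p \<in> B \<and> snd p < fst p then -1 else 1)"
definition spr :: "(nat \<Rightarrow> 'a::comm_ring_1) \<Rightarrow> nat set \<Rightarrow> nat set \<Rightarrow> nat set \<Rightarrow> 'a" where
  "spr sig N A B = (\<Prod>i\<in>N. if i \<in> A \<and> i \<in> B then sig i else 1)"

lemma bs_prod: assumes "finite N" "A \<subseteq> N" "B \<subseteq> N"
  shows "blade_sign sig A B = ipr N A B * spr sig N A B"
proof -
  let ?S = "{(a, b). a \<in> A \<and> b \<in> B \<and> b < a}"
  have 1: "(-1::'a)^card ?S = ipr N A B"
    unfolding ipr_def using assms by (subst neg1_card[where U="N\<times>N"]) (auto intro!: prod.cong)
  have "spr sig N A B = prod sig (N \<inter> {i. i \<in> A \<and> i \<in> B}) * prod (\<lambda>_. 1) (N \<inter> - {i. i \<in> A \<and> i \<in> B})"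
    unfolding spr_def using assms(1) by (rule prod.If_cases)
  also have "N \<inter> {i. i \<in> A \<and> i \<in> B} = A \<inter> B" using assms by auto
  finally have 2: "spr sig N A B = prod sig (A \<inter> B)" by simp
  show ?thesis unfolding blade_sign_def 1 2 ..
qed

lemma cocycle: assumes "finite N" "P \<subseteq> N" "Q \<subseteq> N" "R \<subseteq> N"
  shows "blade_sign sig P Q * blade_sign sig (sd P Q) R = blade_sign sig P (sd Q R) * blade_sign sig Q R"
proof -
  have i: "ipr N P Q * ipr N (sd P Q) R = (ipr N P (sd Q R) * ipr N Q R :: 'a)"
    unfolding ipr_def prod.distrib[symmetric] by (rule prod.cong) (auto simp: sd_def)
  have s: "spr sig N P Q * spr sig N (sd P Q) R = spr sig N P (sd Q R) * spr sig N Q R"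
    unfolding spr_def prod.distrib[symmetric] by (rule prod.cong) (auto simp: sd_def)
  have "blade_sign sig P Q * blade_sign sig (sd P Q) R = (ipr N P Q * ipr N (sd P Q) R) * (spr sig N P Q * spr sig N (sd P Q) R)"
    using assms by (simp add: bs_prod sd_sub mult_ac)
  also have "\<dots> = (ipr N P (sd Q R) * ipr N Q R) * (spr sig N P (sd Q R) * spr sig N Q R)" by (simp only: i s)
  also have "\<dots> = blade_sign sig P (sd Q R) * blade_sign sig Q R"
    using assms by (simp add: bs_prod sd_sub mult_ac)
  finally show ?thesis .
qed




lemma inv_count: fixes A B :: "nat set" assumes "finite A" "finite B"
  shows "card {(a, b). a \<in> A \<and> b \<in> B \<and> b < a} + card {(a, b). a \<in> B \<and> b \<in> A \<and> b < a} + card (A \<inter> B)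
         = card A * card B"
proof -
  let ?S1 = "{(a, b). a \<in> A \<and> b \<in> B \<and> b < a}"
  let ?S2 = "{(a, b). a \<in> B \<and> b \<in> A \<and> b < a}"
  let ?S2' = "{(a, b). a \<in> A \<and> b \<in> B \<and> a < b}"
  let ?D = "{(a, b). a \<in> A \<and> b \<in> B \<and> a = b}"
  have fin: "finite (A \<times> B)" using assms by simp
  have e: "A \<times> B = ?S1 \<union> (?S2' \<union> ?D)" by (rule set_eqI, case_tac x) (auto simp: not_less le_less)
  have f1: "finite ?S1" by (rule finite_subset[OF _ fin]) auto
  have f2: "finite ?S2'" by (rule finite_subset[OF _ fin]) auto
  have f3: "finite ?D" by (rule finite_subset[OF _ fin]) auto
  have c2: "card ?S2' = card ?S2"
  proof -
    have "?S2' = prod.swap ` ?S2" by (auto simp: image_iff)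
    moreover have "inj_on prod.swap ?S2" by (simp add: inj_on_def)
    ultimately show ?thesis by (simp add: card_image)
  qed
  have c3: "card ?D = card (A \<inter> B)"
  proof -
    have "?D = (\<lambda>a. (a, a)) ` (A \<inter> B)" by auto
    moreover have "inj_on (\<lambda>a. (a,a)) (A \<inter> B)" by (simp add: inj_on_def)
    ultimately show ?thesis by (simp add: card_image)
  qed
  have "card A * card B = card (A \<times> B)" by (simp add: card_cartesian_product)
  also have "\<dots> = card ?S1 + (card ?S2' + card ?D)"
    unfolding e using f1 f2 f3
    by (subst card_Un_disjoint, auto, subst card_Un_disjoint, auto)
  finally show ?thesis using c2 c3 by simp
qed

lemma bs_comm: assumes "finite A" "finite B"
  shows "blade_sign sig A B = (-1)^(card A * card B + card (A \<inter> B)) * blade_sign sig B A"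
proof -
  define c1 where "c1 = card {(a, b). a \<in> A \<and> b \<in> B \<and> b < a}"
  define c2 where "c2 = card {(a, b). a \<in> B \<and> b \<in> A \<and> b < a}"
  define k where "k = card (A \<inter> B)"
  have e: "card A * card B + card (A \<inter> B) = c1 + c2 + 2 * k"
    using inv_count[OF assms] unfolding c1_def c2_def k_def by simp
  have bA: "blade_sign sig A B = (-1)^c1 * prod sig (A \<inter> B)" by (simp add: blade_sign_def c1_def)
  have bB: "blade_sign sig B A = (-1)^c2 * prod sig (A \<inter> B)" by (simp add: blade_sign_def c2_def Int_commute)
  have "(-1::'a)^(c1 + c2 + 2 * k) * (-1)^c2 = (-1)^(c1 + c2 + 2 * k + c2)"
    by (simp only: power_add)
  also have "\<dots> = (-1::'a)^(c1 + 2 * (c2 + k))" by (rule arg_cong[where f="\<lambda>m. (-1::'a)^m"]) simp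
  also have "\<dots> = (-1)^c1" by (simp add: power_add power_mult)
  finally show ?thesis unfolding e bA bB by (simp add: mult.assoc[symmetric])
qed

lemma bs_nz: assumes "\<And>a. sig a \<noteq> (0::'a::field)" shows "blade_sign sig A B \<noteq> 0"
  using assms by (cases "finite (A \<inter> B)") (simp_all add: blade_sign_def)




definition cadd :: "'a::field clif \<Rightarrow> 'a clif \<Rightarrow> 'a clif" where "cadd x y = (\<lambda>A. x A + y A)"
definition csm :: "'a::field \<Rightarrow> 'a clif \<Rightarrow> 'a clif" where "csm c x = (\<lambda>A. c * x A)"
definition bl :: "nat set \<Rightarrow> 'a::field clif" where "bl B = (\<lambda>A. if A = B then 1 else 0)"
definition alph :: "'a::field clif \<Rightarrow> 'a clif" where "alph x = (\<lambda>A. (-1)^card A * x A)"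

lemma sd_sd2: "sd (sd A B) (sd B D) = sd A D" by (auto simp: sd_def)

locale clf =
  fixes n :: nat and sig :: "nat \<Rightarrow> 'a::field_char_0"
  assumes sig_nz: "sig a \<noteq> 0"
begin

abbreviation "N \<equiv> {..<n}"
abbreviation "M \<equiv> cl_mult n sig"
abbreviation "bs \<equiv> blade_sign sig"
abbreviation "CC \<equiv> cl_carrier n"

lemma bsnz: "bs A B \<noteq> 0" using bs_nz sig_nz by blast

lemma mult_eq: "M x y C = (if C \<subseteq> N then (\<Sum>A\<in>Pow N. x A * y (sd A C) * bs A (sd A C)) else 0)"
  by (simp add: cl_mult_def sd_def)

lemma mult_carrier[simp]: "M x y \<in> CC"
  by (simp add: cl_carrier_def cl_mult_def)

lemma assoc: "M (M x y) z = M x (M y z)"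
proof
  fix D
  show "M (M x y) z D = M x (M y z) D"
  proof (cases "D \<subseteq> N")
    case False thus ?thesis by (simp add: mult_eq)
  next
    case D: True
    have "M (M x y) z D = (\<Sum>B\<in>Pow N. (\<Sum>A\<in>Pow N. x A * y (sd A B) * bs A (sd A B)) * z (sd B D) * bs B (sd B D))"
      using D by (simp add: mult_eq[of _ _ D]) (rule sum.cong[OF refl], simp add: mult_eq[of x y])
    also have "\<dots> = (\<Sum>B\<in>Pow N. \<Sum>A\<in>Pow N. x A * y (sd A B) * z (sd B D) * (bs A (sd A B) * bs B (sd B D)))"
      by (simp only: sum_distrib_right) (intro sum.cong refl, simp add: mult_ac)
    also have "\<dots> = (\<Sum>A\<in>Pow N. \<Sum>B\<in>Pow N. x A * y (sd A B) * z (sd B D) * (bs A (sd A B) * bs B (sd B D)))"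
      by (rule sum.swap)
    also have "\<dots> = (\<Sum>A\<in>Pow N. x A * (\<Sum>B\<in>Pow N. y B * z (sd B (sd A D)) * bs B (sd B (sd A D))) * bs A (sd A D))"
    proof (rule sum.cong[OF refl])
      fix A assume A: "A \<in> Pow N"
      have "(\<Sum>B\<in>Pow N. y B * z (sd B (sd A D)) * bs B (sd B (sd A D)))
          = (\<Sum>B\<in>Pow N. y (sd A B) * z (sd (sd A B) (sd A D)) * bs (sd A B) (sd (sd A B) (sd A D)))"
        using A by (intro sum.reindex_bij_witness[of _ "sd A" "sd A"]) (auto simp: sd_sub)
      also have "\<dots> = (\<Sum>B\<in>Pow N. y (sd A B) * z (sd B D) * bs (sd A B) (sd B D))"
        by (simp add: sd_sd)
      finally have e: "(\<Sum>B\<in>Pow N. y B * z (sd B (sd A D)) * bs B (sd B (sd A D)))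
         = (\<Sum>B\<in>Pow N. y (sd A B) * z (sd B D) * bs (sd A B) (sd B D))" .
      have c: "bs A (sd A B) * bs B (sd B D) = bs A (sd A D) * bs (sd A B) (sd B D)" if "B \<in> Pow N" for B
        using cocycle[of N A "sd A B" "sd B D" sig] A D that by (simp add: sd_sub sd_sd2)
      show "(\<Sum>B\<in>Pow N. x A * y (sd A B) * z (sd B D) * (bs A (sd A B) * bs B (sd B D)))
          = x A * (\<Sum>B\<in>Pow N. y B * z (sd B (sd A D)) * bs B (sd B (sd A D))) * bs A (sd A D)"
        unfolding e sum_distrib_left sum_distrib_right
        by (rule sum.cong[OF refl], subst c, assumption, simp add: mult_ac)
    qed
    also have "\<dots> = M x (M y z) D"
      using D by (simp add: mult_eq[of _ _ D] mult_eq[of y z] sd_sub)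
    finally show ?thesis .
  qed
qed

end



lemma bs_empty[simp]: "blade_sign sig {} B = 1" "blade_sign sig B {} = 1"
  by (simp_all add: blade_sign_def)

context clf begin

lemma blade_left: "C \<subseteq> N \<Longrightarrow> M (bl C) x = (\<lambda>D. if D \<subseteq> N then x (sd C D) * bs C (sd C D) else 0)"
  by (rule ext) (simp add: mult_eq bl_def if_distrib[of "\<lambda>t. t * _"] cong: if_cong)

lemma blade_right: "C \<subseteq> N \<Longrightarrow> M x (bl C) = (\<lambda>D. if D \<subseteq> N then x (sd C D) * bs (sd C D) C else 0)"
proof (rule ext)
  fix D assume C: "C \<subseteq> N"
  show "M x (bl C) D = (if D \<subseteq> N then x (sd C D) * bs (sd C D) C else 0)"
  proof (cases "D \<subseteq> N")
    case True
    have "M x (bl C) D = (\<Sum>A\<in>Pow N. x A * (if sd A D = C then 1 else 0) * bs A (sd A D))"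
      using True by (simp add: mult_eq bl_def)
    also have "\<dots> = (\<Sum>A\<in>Pow N. if A = sd C D then x A * bs A C else 0)"
      by (rule sum.cong) (auto simp: sd_eq_iff)
    also have "\<dots> = x (sd C D) * bs (sd C D) C" using C True by (simp add: sd_sub)
    finally show ?thesis using True by simp
  qed (simp add: mult_eq)
qed

lemma one_bl: "cl_one = bl {}" by (simp add: cl_one_def bl_def)

lemma carrierD: "x \<in> CC \<Longrightarrow> \<not> A \<subseteq> N \<Longrightarrow> x A = 0" by (simp add: cl_carrier_def)

lemma one_left[simp]: "x \<in> CC \<Longrightarrow> M cl_one x = x"
  by (rule ext) (auto simp: one_bl blade_left carrierD)
lemma one_right[simp]: "x \<in> CC \<Longrightarrow> M x cl_one = x"
  by (rule ext) (auto simp: one_bl blade_right carrierD)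

lemma one_carrier[simp]: "cl_one \<in> CC" by (simp add: cl_carrier_def cl_one_def)
lemma bl_carrier[simp]: "A \<subseteq> N \<Longrightarrow> bl A \<in> CC" by (simp add: cl_carrier_def bl_def)
lemma cadd_carrier[simp]: "x \<in> CC \<Longrightarrow> y \<in> CC \<Longrightarrow> cadd x y \<in> CC" by (simp add: cl_carrier_def cadd_def)
lemma csm_carrier[simp]: "x \<in> CC \<Longrightarrow> csm c x \<in> CC" by (simp add: cl_carrier_def csm_def)
lemma alph_carrier[simp]: "x \<in> CC \<Longrightarrow> alph x \<in> CC" by (simp add: cl_carrier_def alph_def)

lemma mult_cadd_left: "M (cadd x y) z = cadd (M x z) (M y z)"
  by (rule ext) (simp add: mult_eq cadd_def sum.distrib distrib_right)
lemma mult_cadd_right: "M x (cadd y z) = cadd (M x y) (M x z)"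
  by (rule ext) (simp add: mult_eq cadd_def sum.distrib distrib_left distrib_right)
lemma mult_csm_left: "M (csm c x) z = csm c (M x z)"
  by (rule ext) (simp add: mult_eq csm_def sum_distrib_left mult.assoc)
lemma mult_csm_right: "M x (csm c z) = csm c (M x z)"
  by (rule ext) (simp add: mult_eq csm_def sum_distrib_left ac_simps)

lemma card_sd_parity: "finite A \<Longrightarrow> finite D \<Longrightarrow> ((-1::'a)^card A) * (-1)^card (sd A D) = (-1)^card D"
proof -
  assume f: "finite A" "finite D"
  have a: "card A = card (A - D) + card (A \<inter> D)"
  proof -
    have "A = (A - D) \<union> (A \<inter> D)" by auto
    hence "card A = card ((A - D) \<union> (A \<inter> D))" by simp
    also have "\<dots> = card (A - D) + card (A \<inter> D)" using f by (intro card_Un_disjoint) auto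
    finally show ?thesis .
  qed
  have d: "card D = card (D - A) + card (A \<inter> D)"
  proof -
    have "D = (D - A) \<union> (A \<inter> D)" by auto
    hence "card D = card ((D - A) \<union> (A \<inter> D))" by simp
    also have "\<dots> = card (D - A) + card (A \<inter> D)" using f by (intro card_Un_disjoint) auto
    finally show ?thesis .
  qed
  have s: "card (sd A D) = card (A - D) + card (D - A)" using f unfolding sd_def by (subst card_Un_disjoint) auto
  have "card A + card (sd A D) = card D + 2 * card (A - D)" using a d s by simp
  hence "((-1::'a)^card A) * (-1)^card (sd A D) = (-1)^(card D + 2 * card (A - D))" by (simp add: power_add[symmetric])
  thus ?thesis by (simp add: power_add power_mult)
qed

lemma alph_mult: "alph (M x y) = M (alph x) (alph y)"
proof (rule ext)
  fix D show "alph (M x y) D = M (alph x) (alph y) D"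
  proof (cases "D \<subseteq> N")
    case True
    have fin: "finite D" using True finite_subset by blast
    have t: "(- 1) ^ card A * x A * ((- 1) ^ card (sd A D) * y (sd A D)) * bs A (sd A D) =
         (- 1) ^ card D * (x A * y (sd A D) * bs A (sd A D))" if "A \<in> Pow N" for A
    proof -
      from that have "finite A" using finite_subset by blast
      hence "((-1::'a)^card A) * (-1)^card (sd A D) = (-1)^card D" using card_sd_parity fin by blast
      thus ?thesis by (metis (no_types, lifting) mult.assoc mult.left_commute)
    qed
    have "M (alph x) (alph y) D = (\<Sum>A\<in>Pow N. (-1)^card D * (x A * y (sd A D) * bs A (sd A D)))"
      using True by (simp add: mult_eq alph_def) (rule sum.cong[OF refl], rule t)
    thus ?thesis using True by (simp add: alph_def mult_eq sum_distrib_left)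
  qed (simp add: alph_def mult_eq)
qed

lemma neg1_sq: "((-1::'b::comm_ring_1)^k) * (-1)^k = 1" by (induct k) auto
lemma alph_alph[simp]: "alph (alph x) = x" by (rule ext) (simp add: alph_def mult.assoc[symmetric] neg1_sq)
lemma alph_one[simp]: "alph cl_one = cl_one" by (rule ext) (simp add: alph_def cl_one_def)
lemma alph_bl: "alph (bl A) = csm ((-1)^card A) (bl A)" by (rule ext) (simp add: alph_def bl_def csm_def)
lemma alph_cadd: "alph (cadd x y) = cadd (alph x) (alph y)" by (rule ext) (simp add: alph_def cadd_def algebra_simps)
lemma alph_csm: "alph (csm c x) = csm c (alph x)" by (rule ext) (simp add: alph_def csm_def algebra_simps)

end



context clf begin

lemma comm_bl: assumes "C \<subseteq> N" "B \<subseteq> N" "M (bl C) x = M x (bl C)"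
  shows "x B * (bs C B - bs B C) = 0"
proof -
  have "M (bl C) x (sd C B) = M x (bl C) (sd C B)" using assms(3) by simp
  hence "x B * bs C B = x B * bs B C" using assms(1,2) by (simp add: blade_left blade_right sd_sub)
  thus ?thesis by (simp add: right_diff_distrib)
qed

lemma finN: "B \<subseteq> N \<Longrightarrow> finite B" using finite_subset by blast

lemma cent_even: assumes x: "x \<in> CC" and c: "\<And>a b. a \<in> N \<Longrightarrow> b \<in> N \<Longrightarrow> a \<noteq> b \<Longrightarrow> M (bl {a,b}) x = M x (bl {a,b})"
  and B: "B \<subseteq> N" "B \<noteq> {}" "B \<noteq> N"
  shows "x B = 0"
proof -
  obtain a where a: "a \<in> B" using B by blast
  obtain b where b: "b \<in> N" "b \<notin> B" using B by blast
  have ab: "a \<noteq> b" "a \<in> N" using a b B by auto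
  have "{a,b} \<inter> B = {a}" using a b by auto
  hence "bs {a,b} B = (-1)^(2 * card B + 1) * bs B {a,b}"
    using bs_comm[of "{a,b}" B sig] finN[OF B(1)] ab by simp
  hence e: "bs {a,b} B = - bs B {a,b}" by simp
  have "x B * (bs {a,b} B - bs B {a,b}) = 0" using comm_bl[OF _ B(1) c[OF ab(2) b(1) ab(1)]] ab b by simp
  hence "x B * (2 * bs B {a,b}) = 0" unfolding e by (simp add: algebra_simps)
  thus ?thesis using bsnz by simp
qed

lemma cent_odd: assumes c: "\<And>a. a \<in> N \<Longrightarrow> M (bl {a}) x = M x (bl {a})"
  and B: "B \<subseteq> N" "x B \<noteq> 0"
  shows "B = {} \<or> (B = N \<and> odd n)"
proof (rule ccontr)
  assume H: "\<not> (B = {} \<or> (B = N \<and> odd n))"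
  have key: "even (card B + card ({a} \<inter> B))" if a: "a \<in> N" for a
  proof (rule ccontr)
    assume od: "odd (card B + card ({a} \<inter> B))"
    have "bs {a} B = (-1)^(card B + card ({a} \<inter> B)) * bs B {a}"
      using bs_comm[of "{a}" B sig] finN[OF B(1)] by simp
    hence e: "bs {a} B = - bs B {a}" using od by simp
    have "x B * (bs {a} B - bs B {a}) = 0" using comm_bl[OF _ B(1) c[OF a]] a by simp
    hence "x B * (2 * bs B {a}) = 0" unfolding e by (simp add: algebra_simps)
    thus False using bsnz B(2) by simp
  qed
  obtain a where a: "a \<in> B" using H by blast
  have "{a} \<inter> B = {a}" using a by auto
  hence oB: "odd (card B)" using key[of a] a B by auto
  show False
  proof (cases "B = N")
    case True thus False using H oB by simp
  next
    case False
    then obtain b where b: "b \<in> N" "b \<notin> B" using B by blast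
    have "{b} \<inter> B = {}" using b by auto
    thus False using key[OF b(1)] oB by simp
  qed
qed

lemma omega_comm_odd: assumes "odd n" shows "M (bl N) x = M x (bl N)"
proof (rule ext)
  fix D
  show "M (bl N) x D = M x (bl N) D"
  proof (cases "D \<subseteq> N")
    case True
    let ?k = "card (sd N D)"
    have i: "N \<inter> sd N D = sd N D" using True by (auto simp: sd_def)
    have "bs N (sd N D) = (-1)^(n * ?k + ?k) * bs (sd N D) N"
      using bs_comm[of N "sd N D" sig, OF finite_lessThan finN[OF sd_sub[OF subset_refl True]]] i by simp
    moreover have "even (n * ?k + ?k)" using assms by simp
    ultimately have "bs N (sd N D) = bs (sd N D) N" by simp
    thus ?thesis using True by (simp add: blade_left blade_right)
  qed (simp add: mult_eq)
qed

lemma omega_sq: "M (bl N) (bl N) = csm (bs N N) cl_one"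
  by (rule ext) (simp add: blade_left, auto simp: csm_def cl_one_def bl_def sd_def)

lemma bl2_par: "a \<in> N \<Longrightarrow> b \<in> N \<Longrightarrow> a \<noteq> b \<Longrightarrow> bl {a,b} \<in> cl_par n 0"
  by (simp add: cl_par_def bl_def cl_carrier_def)
lemma bl1_par: "a \<in> N \<Longrightarrow> bl {a} \<in> cl_par n 1"
  by (simp add: cl_par_def bl_def cl_carrier_def)

lemma inv_unique: assumes "T \<in> CC" "Ti \<in> CC" "M T Ti = cl_one" "M Ti T = cl_one"
  shows "cl_inv n sig T = Ti"
  unfolding cl_inv_def
proof (rule the_equality)
  show "Ti \<in> CC \<and> M T Ti = cl_one \<and> M Ti T = cl_one" using assms by simp
  fix y assume y: "y \<in> CC \<and> M T y = cl_one \<and> M y T = cl_one"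
  have "y = M (M Ti T) y" using y assms by simp
  also have "\<dots> = M Ti (M T y)" by (rule assoc)
  also have "\<dots> = Ti" using y assms by simp
  finally show "y = Ti" .
qed

lemma par_alph: fixes X :: "'a clif" assumes "X \<in> cl_par n j" "j < 2" shows "alph X = csm ((-1)^j) X"
proof (rule ext)
  fix A show "alph X A = csm ((-1)^j) X A"
  proof (cases "X A = 0")
    case False
    hence "card A mod 2 = j" using assms by (simp add: cl_par_def)
    hence "((-1::'a)^card A) = (-1)^j" by (metis minus_one_power_iff even_mod_2_iff mod_mod_trivial)
    thus ?thesis by (simp add: alph_def csm_def)
  qed (simp add: alph_def csm_def)
qed

lemma alph_par: fixes Y :: "'a clif" assumes "Y \<in> CC" "alph Y = csm ((-1)^j) Y" "j < 2" shows "Y \<in> cl_par n j"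
  unfolding cl_par_def
proof (intro CollectI conjI allI impI)
  show "Y \<in> CC" by fact
  fix A assume nz: "Y A \<noteq> 0"
  have "(-1)^card A * Y A = (-1)^j * Y A" using fun_cong[OF assms(2), of A] by (simp add: alph_def csm_def)
  hence e: "((-1::'a)^card A) = (-1)^j" using nz by simp
  show "card A mod 2 = j"
  proof (cases "j = 0")
    case True
    with e have "even (card A)" by (auto simp: minus_one_power_iff split: if_splits)
    thus ?thesis using True by simp
  next
    case False
    with assms(3) have j1: "j = 1" by simp
    with e have "odd (card A)" by (auto simp: minus_one_power_iff split: if_splits)
    thus ?thesis using j1 by (simp add: odd_iff_mod_2_eq_one)
  qed
qed

end



lemma csm_csm[simp]: "csm a (csm b x) = csm (a*b) x" by (rule ext) (simp add: csm_def)
lemma csm_one[simp]: "csm 1 x = x" by (rule ext) (simp add: csm_def)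
lemma csm_cancel: "(c::'a::field) \<noteq> 0 \<Longrightarrow> csm c a = csm c b \<Longrightarrow> a = b"
  by (rule ext) (drule fun_cong, simp add: csm_def)

context clf begin

lemma cancel_left: "M Ti T = cl_one \<Longrightarrow> z \<in> CC \<Longrightarrow> M Ti (M T z) = z"
  by (simp add: assoc[symmetric])

lemma Gamma_U: assumes G: "T \<in> cl_Gamma n sig j" and j: "j < 2" and n1: "n \<ge> 1"
  shows "\<exists>Ti l m. T \<in> CC \<and> Ti \<in> CC \<and> M T Ti = cl_one \<and> M Ti T = cl_one \<and>
           alph T = M T (cadd (csm l cl_one) (csm m (bl N)))"
proof -
  from G obtain Ti where T: "T \<in> CC" and Ti: "Ti \<in> CC" and i1: "M T Ti = cl_one" and i2: "M Ti T = cl_one"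
    and hyp: "\<And>X. X \<in> cl_par n j \<Longrightarrow> M (M T X) (cl_inv n sig T) \<in> cl_par n j"
    by (auto simp: cl_Gamma_def cl_units_def)
  have ci: "cl_inv n sig T = Ti" using inv_unique T Ti i1 i2 by blast
  define U where "U = M Ti (alph T)"
  have ai1: "M (alph T) (alph Ti) = cl_one" using i1 by (simp add: alph_mult[symmetric])
  have ai2: "M (alph Ti) (alph T) = cl_one" using i2 by (simp add: alph_mult[symmetric])
  have comm: "M U X = M X U" if X: "X \<in> cl_par n j" for X
  proof -
    define Y where "Y = M (M T X) Ti"
    have Y: "Y \<in> cl_par n j" using hyp[OF X] ci by (simp add: Y_def)
    have XC: "X \<in> CC" using X by (simp add: cl_par_def)
    let ?s = "(-1::'a)^j"
    have s0: "?s \<noteq> 0" by simp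
    have "csm ?s Y = alph Y" using par_alph[OF Y j] by simp
    also have "\<dots> = M (M (alph T) (alph X)) (alph Ti)" by (simp add: Y_def alph_mult)
    also have "\<dots> = csm ?s (M (M (alph T) X) (alph Ti))"
      by (simp add: par_alph[OF X j] mult_csm_left mult_csm_right)
    finally have e: "M (M (alph T) X) (alph Ti) = Y" using csm_cancel[OF s0] by metis
    have "M (alph T) X = M (M (M (alph T) X) (alph Ti)) (alph T)"
      by (simp add: assoc ai2 XC)
    also have "\<dots> = M Y (alph T)" by (simp add: e)
    finally have e2: "M (alph T) X = M Y (alph T)" .
    have "M U X = M Ti (M Y (alph T))" by (simp add: U_def assoc e2)
    also have "\<dots> = M X U" by (simp add: Y_def U_def assoc cancel_left[OF i2])
    finally show ?thesis .
  qed
  have UC: "U \<in> CC" by (simp add: U_def)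
  have z: "U B = 0" if "B \<noteq> {}" "B \<noteq> N" for B
  proof (cases "B \<subseteq> N")
    case False thus ?thesis using UC carrierD by blast
  next
    case BN: True
    show ?thesis
    proof (cases "j = 0")
      case True
      show ?thesis
        by (rule cent_even[OF UC _ BN that]) (rule comm[symmetric], simp add: bl2_par True)
    next
      case False
      hence j1: "j = 1" using j by simp
      show ?thesis
      proof (rule ccontr)
        assume nz: "U B \<noteq> 0"
        have "\<And>a. a \<in> N \<Longrightarrow> M (bl {a}) U = M U (bl {a})"
          by (rule comm[symmetric], unfold j1, rule bl1_par, simp)
        from cent_odd[of U, OF this BN nz] that show False by simp
      qed
    qed
  qed
  have Nne: "N \<noteq> {}" using n1 by (auto simp: lessThan_empty_iff)
  have Ueq: "U = cadd (csm (U {}) cl_one) (csm (U N) (bl N))"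
    by (rule ext) (auto simp: cadd_def csm_def cl_one_def bl_def z Nne)
  have "alph T = M (M T Ti) (alph T)" using i1 T by simp
  also have "\<dots> = M T U" by (simp add: U_def assoc)
  finally have "alph T = M T (cadd (csm (U {}) cl_one) (csm (U N) (bl N)))" using Ueq by simp
  thus ?thesis using T Ti i1 i2 by blast
qed

end



context clf begin

lemma card_sdN: "B \<subseteq> N \<Longrightarrow> card (sd N B) + card B = n"
proof -
  assume B: "B \<subseteq> N"
  have "sd N B = N - B" using B by (auto simp: sd_def)
  hence "card (sd N B) = n - card B" using B by (simp add: card_Diff_subset finN)
  moreover have "card B \<le> n" using B by (metis card_lessThan card_mono finite_lessThan)
  ultimately show ?thesis by simp
qed

lemma Nne: "n \<ge> 1 \<Longrightarrow> N \<noteq> {}" by (auto simp: lessThan_empty_iff)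

lemma core_even:
  assumes ev: "even n" and n1: "n \<ge> 1"
    and T: "T \<in> CC" and Ti: "Ti \<in> CC" and i1: "M T Ti = cl_one" and i2: "M Ti T = cl_one"
    and aT: "alph T = M T (cadd (csm l cl_one) (csm m (bl N)))"
  shows "T \<in> cl_units n sig (cl_par n 0) \<union> cl_units n sig (cl_par n 1)"
proof -
  define u where "u = cadd (csm l cl_one) (csm m (bl N))"
  have Nn: "N \<noteq> {}" using Nne n1 .
  have uC: "u \<in> CC" by (simp add: u_def)
  have au: "alph u = u"
    by (rule ext) (auto simp: u_def alph_def cadd_def csm_def cl_one_def bl_def ev)
  have "T = alph (alph T)" by simp
  also have "\<dots> = M (alph T) (alph u)" by (simp add: aT u_def[symmetric] alph_mult)
  also have "\<dots> = M T (M u u)" by (simp add: aT u_def[symmetric] au assoc)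
  finally have Tuu: "T = M T (M u u)" .
  have uu: "M u u = cl_one"
  proof -
    have "cl_one = M Ti (M T (M u u))" using i2 Tuu by simp
    also have "\<dots> = M u u" by (simp add: cancel_left[OF i2])
    finally show ?thesis by simp
  qed
  have "M u u = cadd (csm l u) (csm m (M u (bl N)))"
    by (subst (2) u_def) (simp add: mult_cadd_right mult_csm_right uC)
  hence "M u u N = l * u N + m * M u (bl N) N" by (simp add: cadd_def csm_def)
  also have "\<dots> = l * m + m * l" using Nn by (simp add: blade_right) (simp add: u_def cadd_def csm_def cl_one_def bl_def)
  finally have "l * m + m * l = 0" using uu Nn by (simp add: cl_one_def)
  hence lm: "l * m = 0" by simp
  have m0: "m = 0"
  proof (rule ccontr)
    assume mnz: "m \<noteq> 0"
    hence l0: "l = 0" using lm by simp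
    have aT2: "alph T = csm m (M T (bl N))"
    proof -
      have "cadd (csm 0 cl_one) (csm m (bl N)) = csm m (bl N)" by (rule ext) (simp add: cadd_def csm_def)
      thus ?thesis using aT l0 by (simp add: mult_csm_right)
    qed
    have Teq: "T = csm m (M (bl N) T)"
    proof (rule ext)
      fix B show "T B = csm m (M (bl N) T) B"
      proof (cases "B \<subseteq> N")
        case False thus ?thesis using T carrierD by (simp add: blade_left csm_def)
      next
        case True
        define B' where "B' = sd N B"
        have B'N: "B' \<subseteq> N" using True by (simp add: B'_def sd_sub)
        have sdB': "sd N B' = B" by (simp add: B'_def)
        have "(-1)^card B * T B = m * (T B' * bs B' N)"
          using fun_cong[OF aT2, of B] True by (simp add: alph_def csm_def blade_right B'_def)
        moreover have "bs N B' = (-1)^(card B) * bs B' N"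
        proof -
          have i: "N \<inter> B' = B'" using B'N by auto
          have c: "card B' + card B = n" using card_sdN[OF True] by (simp add: B'_def)
          have "bs N B' = (-1)^(n * card B' + card B') * bs B' N"
            using bs_comm[of N B' sig, OF finite_lessThan finN[OF B'N]] i by simp
          moreover have "even (n * card B' + card B' + card B)" using c ev by (metis even_add even_mult_iff add.assoc)
          hence "((-1::'a)^(n * card B' + card B')) = (-1)^card B"
            by (metis (no_types, lifting) even_add minus_one_power_iff)
          ultimately show ?thesis by simp
        qed
        ultimately have "m * (T B' * bs N B') = (-1)^card B * ((-1)^card B * T B)" by (simp add: ac_simps)
        hence "m * (T B' * bs N B') = T B" by (simp add: mult.assoc[symmetric] neg1_sq)
        thus ?thesis using True by (simp add: csm_def blade_left B'_def)
      qed
    qed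
    have "cl_one = M (csm m (M (bl N) T)) Ti" using i1 Teq by simp
    also have "\<dots> = csm m (bl N)" by (simp add: mult_csm_left assoc i1 Nn)
    finally have "cl_one {} = csm m (bl N) {}" by simp
    thus False using Nn by (simp add: cl_one_def csm_def bl_def)
  qed
  have aT3: "alph T = csm l T"
  proof -
    have "cadd (csm l cl_one) (csm 0 (bl N)) = csm l cl_one" by (rule ext) (simp add: cadd_def csm_def)
    thus ?thesis using aT m0 T by (simp add: mult_csm_right)
  qed
  have un: "T \<in> cl_units n sig S" if "T \<in> S" for S using that Ti i1 i2 by (auto simp: cl_units_def)
  show ?thesis
  proof (cases "l = 1")
    case True
    hence "T \<in> cl_par n 0" using alph_par[OF T, of 0] aT3 by simp
    thus ?thesis using un by blast
  next
    case False
    have "alph T = csm ((-1)^1) T"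
    proof (rule ext)
      fix B
      have e: "(-1)^card B * T B = l * T B" using fun_cong[OF aT3, of B] by (simp add: alph_def csm_def)
      show "alph T B = csm ((-1)^1) T B"
      proof (cases "even (card B)")
        case True
        hence "T B = 0" using e False by simp
        thus ?thesis by (simp add: alph_def csm_def)
      qed (simp add: alph_def csm_def)
    qed
    hence "T \<in> cl_par n 1" using alph_par[OF T, of 1] by simp
    thus ?thesis using un by blast
  qed
qed

end



context clf begin

definition "Qodd = {M W T | W T. W \<in> cl_units n sig (cl_center n sig) \<and> T \<in> cl_units n sig (cl_par n 0)}"

lemma center_I: "W \<in> CC \<Longrightarrow> (\<And>y. y \<in> CC \<Longrightarrow> M W y = M y W) \<Longrightarrow> W \<in> cl_center n sig"
  by (simp add: cl_center_def)

lemma core_odd: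
  assumes od: "odd n" and n1: "n \<ge> 1"
    and T: "T \<in> CC" and Ti: "Ti \<in> CC" and i1: "M T Ti = cl_one" and i2: "M Ti T = cl_one"
    and aT: "alph T = M T (cadd (csm l cl_one) (csm m (bl N)))"
  shows "T \<in> Qodd"
proof -
  have Nn: "N \<noteq> {}" using Nne n1 .
  have aT': "alph T = cadd (csm l T) (csm m (M T (bl N)))"
    using aT T by (simp add: mult_cadd_right mult_csm_right)
  have E: "(-1)^card B * T B = l * T B + m * (T (sd N B) * bs (sd N B) N)" if B: "B \<subseteq> N" for B
    using fun_cong[OF aT', of B] B by (simp add: alph_def cadd_def csm_def blade_right)
  have par: "even (card (sd N B)) \<longleftrightarrow> odd (card B)" if B: "B \<subseteq> N" for B
    using card_sdN[OF B] od by (metis even_add)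
  have omC: "bl N \<in> CC" by simp
  have omc: "M (bl N) y = M y (bl N)" for y using omega_comm_odd[OF od] .
  show ?thesis
  proof (cases "l = -1")
    case False
    hence l1: "1 + l \<noteq> 0" by (metis add.commute add_eq_0_iff)
    define T0 where "T0 = (\<lambda>B. if even (card B) then T B else 0)"
    define c where "c = - m / (1 + l)"
    define W where "W = cadd cl_one (csm c (bl N))"
    have T0C: "T0 \<in> CC" using T by (auto simp: T0_def cl_carrier_def)
    have T0p: "T0 \<in> cl_par n 0" using T0C by (auto simp: T0_def cl_par_def split: if_splits)
    have WC: "W \<in> CC" by (simp add: W_def)
    have Wc: "M W y = M y W" if "y \<in> CC" for y
      using that by (simp add: W_def mult_cadd_left mult_cadd_right mult_csm_left mult_csm_right omc)
    have Wcent: "W \<in> cl_center n sig" using center_I[OF WC Wc] .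
    have TW: "T = M T0 W"
    proof (rule ext)
      fix B
      have r: "M T0 W = cadd T0 (csm c (M T0 (bl N)))"
        using T0C by (simp add: W_def mult_cadd_right mult_csm_right)
      show "T B = M T0 W B"
      proof (cases "B \<subseteq> N")
        case False thus ?thesis using carrierD[OF T False] carrierD[OF T0C False] by (simp add: r cadd_def csm_def blade_right)
      next
        case True
        have "M T0 W B = T0 B + c * (T0 (sd N B) * bs (sd N B) N)"
          using True by (simp add: r cadd_def csm_def blade_right)
        also have "\<dots> = T B"
        proof (cases "even (card B)")
          case True
          thus ?thesis using par[OF \<open>B \<subseteq> N\<close>] by (simp add: T0_def)
        next
          case odB: False
          hence "- T B = l * T B + m * (T (sd N B) * bs (sd N B) N)" using E[OF True] by simp
          define X where "X = T (sd N B) * bs (sd N B) N"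
          have h: "- T B = l * T B + m * X" using odB E[OF True] by (simp add: X_def)
          have "(1 + l) * T B + m * X = T B + (l * T B + m * X)" by (simp add: algebra_simps)
          also have "\<dots> = 0" by (simp add: h[symmetric])
          finally have "m * X = - ((1 + l) * T B)" by (simp add: add_eq_0_iff)
          hence "c * X = - (- ((1 + l) * T B)) / (1 + l)" by (simp add: c_def)
          hence "T B = c * X" using l1 by simp
          hence "T B = c * (T (sd N B) * bs (sd N B) N)" by (simp add: X_def)
          thus ?thesis using odB par[OF True] by (simp add: T0_def)
        qed
        finally show ?thesis by simp
      qed
    qed
    have WT: "T = M W T0" using TW Wc[OF T0C] by simp
    have WiC: "M W Ti = M Ti W" using Wc[OF Ti] .
    have T0u: "T0 \<in> cl_units n sig (cl_par n 0)"
    proof -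
      have a: "M T0 (M W Ti) = cl_one" using i1 TW by (simp add: assoc[symmetric])
      have b: "M (M W Ti) T0 = cl_one" unfolding WiC using i2 WT by (simp add: assoc)
      show ?thesis using a b T0p by (auto simp: cl_units_def)
    qed
    have Wu: "W \<in> cl_units n sig (cl_center n sig)"
    proof -
      have a: "M W (M T0 Ti) = cl_one" using i1 WT by (simp add: assoc[symmetric])
      have b: "M (M T0 Ti) W = cl_one" using i1 TW WiC by (simp add: assoc[symmetric]) (simp add: assoc)
      show ?thesis using a b Wcent by (auto simp: cl_units_def)
    qed
    show ?thesis using WT T0u Wu by (auto simp: Qodd_def)
  next
    case True
    have Tev0: "T B = 0" if B: "B \<subseteq> N" "even (card B)" for B
    proof -
      define B' where "B' = sd N B"
      have B'N: "B' \<subseteq> N" using B by (simp add: B'_def sd_sub)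
      have oB': "odd (card B')" using par[OF B(1)] B by (simp add: B'_def)
      have "- T B' = - T B' + m * (T B * bs B N)"
        using E[OF B'N] oB' True by (simp add: B'_def)
      hence mT: "m * T B = 0" using bsnz by simp
      have "T B = - T B + m * (T B' * bs B' N)" using E[OF B(1)] B True by (simp add: B'_def)
      thus ?thesis using mT by (cases "m = 0") simp_all
    qed
    have aTm: "alph T = csm ((-1)^1) T"
    proof (rule ext)
      fix B show "alph T B = csm ((-1)^1) T B"
      proof (cases "B \<subseteq> N")
        case False thus ?thesis using carrierD[OF T False] by (simp add: alph_def csm_def)
      next
        case True thus ?thesis using Tev0[OF True] by (cases "even (card B)") (simp_all add: alph_def csm_def)
      qed
    qed
    define s where "s = bs N N"
    have s0: "s \<noteq> 0" by (simp add: s_def bsnz)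
    define wi where "wi = csm (1/s) (bl N)"
    have wiC: "wi \<in> CC" by (simp add: wi_def)
    have w1: "M (bl N) wi = cl_one" using s0 by (simp add: wi_def mult_csm_right omega_sq s_def)
    have w2: "M wi (bl N) = cl_one" using s0 by (simp add: wi_def mult_csm_left omega_sq s_def)
    define T' where "T' = M wi T"
    have awi: "alph wi = csm (-1) wi" using od by (simp add: wi_def alph_csm alph_bl mult.commute)
    have "alph T' = csm ((-1)^0) T'"
      by (simp add: T'_def alph_mult awi aTm mult_csm_left mult_csm_right)
    hence T'p: "T' \<in> cl_par n 0" using alph_par[of T' 0] by (simp add: T'_def)
    have T'u: "T' \<in> cl_units n sig (cl_par n 0)"
    proof -
      have a: "M T' (M Ti (bl N)) = cl_one" using i1 w2 by (simp add: T'_def assoc[symmetric]) (simp add: assoc)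
      have b: "M (M Ti (bl N)) T' = cl_one" using i2 w1 T by (simp add: T'_def assoc[symmetric]) (simp add: assoc)
      show ?thesis using a b T'p by (auto simp: cl_units_def)
    qed
    have Wu: "bl N \<in> cl_units n sig (cl_center n sig)"
      using center_I[OF omC omc] w1 w2 wiC by (auto simp: cl_units_def)
    have "T = M (bl N) T'" using w1 T by (simp add: T'_def assoc[symmetric])
    thus ?thesis using T'u Wu by (auto simp: Qodd_def)
  qed
qed

end



context clf begin

lemma P_sub_Gamma: assumes P: "T \<in> cl_P n sig" and j: "j < 2"
  shows "T \<in> cl_Gamma n sig j"
proof -
  obtain W T' k where TW: "T = M W T'" and Wu: "W \<in> cl_units n sig (cl_center n sig)"
    and T'u: "T' \<in> cl_units n sig (cl_par n k)" and k: "k < 2"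
    using P unfolding cl_P_def by (auto; metis less_2_cases_iff)
  obtain Wi where WC: "W \<in> CC" and Wc: "\<And>y. y \<in> CC \<Longrightarrow> M W y = M y W" and WiC: "Wi \<in> CC"
    and w1: "M W Wi = cl_one" and w2: "M Wi W = cl_one"
    using Wu by (auto simp: cl_units_def cl_center_def)
  obtain T'i where T'p: "T' \<in> cl_par n k" and T'iC: "T'i \<in> CC"
    and t1: "M T' T'i = cl_one" and t2: "M T'i T' = cl_one"
    using T'u by (auto simp: cl_units_def)
  have T'C: "T' \<in> CC" using T'p by (simp add: cl_par_def)
  define Ti where "Ti = M T'i Wi"
  have TC: "T \<in> CC" using TW by simp
  have TiC: "Ti \<in> CC" by (simp add: Ti_def)
  have i1: "M T Ti = cl_one" using t1 w1 WiC by (simp add: TW Ti_def assoc[symmetric]) (simp add: assoc)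
  have i2: "M Ti T = cl_one" using t2 w2 T'C by (simp add: TW Ti_def assoc[symmetric]) (simp add: assoc)
  have ci: "cl_inv n sig T = Ti" using inv_unique[OF TC TiC i1 i2] .
  let ?sk = "(-1::'a)^k"
  have aT': "alph T' = csm ?sk T'" using par_alph[OF T'p k] .
  have skk: "?sk * ?sk = 1" by (simp add: neg1_sq)
  have aT'i: "alph T'i = csm ?sk T'i"
  proof -
    have o: "M (alph T') (csm ?sk T'i) = cl_one" using t1 skk by (simp add: aT' mult_csm_left mult_csm_right)
    have "alph T'i = M (alph T'i) (M (alph T') (csm ?sk T'i))" using T'iC by (simp add: o)
    also have "\<dots> = M (alph (M T'i T')) (csm ?sk T'i)" by (simp add: alph_mult assoc)
    also have "\<dots> = csm ?sk T'i" using t2 T'iC by simp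
    finally show ?thesis .
  qed
  have "M (M T X) Ti \<in> cl_par n j" if X: "X \<in> cl_par n j" for X
  proof -
    define Z where "Z = M T' (M X T'i)"
    have "M (M T X) Ti = M W (M Z Wi)" by (simp add: TW Ti_def Z_def assoc)
    also have "\<dots> = M (M Z W) Wi" using Wc[of Z] by (simp add: assoc[symmetric] Z_def)
    also have "\<dots> = Z" using w1 T'iC by (simp add: assoc Z_def)
    finally have YZ: "M (M T X) Ti = Z" .
    have "alph Z = csm ?sk (csm ((-1)^j) (csm ?sk Z))"
      by (simp add: Z_def alph_mult aT' aT'i par_alph[OF X j] mult_csm_left mult_csm_right mult.assoc)
    also have "\<dots> = csm ((-1)^j) Z" using skk by (simp add: ac_simps)
    finally have "alph Z = csm ((-1)^j) Z" .
    hence "Z \<in> cl_par n j" using alph_par[of Z j] j by (simp add: Z_def)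
    thus ?thesis using YZ by simp
  qed
  thus ?thesis using TC TiC i1 i2 ci by (auto simp: cl_Gamma_def cl_units_def)
qed

lemma concl: assumes n1: "n \<ge> 1" shows "cl_thm_concl n sig"
proof -
  define Q where "Q = (if even n then cl_units n sig (cl_par n 0) \<union> cl_units n sig (cl_par n 1) else Qodd)"
  have GQ: "cl_Gamma n sig j \<subseteq> Q" if j: "j < 2" for j
  proof
    fix T assume "T \<in> cl_Gamma n sig j"
    then obtain Ti l m where T: "T \<in> CC" "Ti \<in> CC" "M T Ti = cl_one" "M Ti T = cl_one"
      "alph T = M T (cadd (csm l cl_one) (csm m (bl N)))" using Gamma_U[OF _ j n1] by blast
    show "T \<in> Q"
    proof (cases "even n")
      case True thus ?thesis using core_even[OF True n1 T] by (simp add: Q_def)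
    next
      case False thus ?thesis using core_odd[OF False n1 T] by (simp add: Q_def)
    qed
  qed
  have QP: "Q \<subseteq> cl_P n sig"
  proof
    fix T assume TQ: "T \<in> Q"
    show "T \<in> cl_P n sig"
    proof (cases "even n")
      case True
      have oneu: "cl_one \<in> cl_units n sig (cl_center n sig)"
        by (auto simp: cl_units_def cl_center_def intro!: bexI[of _ cl_one])
      have TC: "T \<in> CC" using TQ True by (auto simp: Q_def cl_units_def cl_par_def)
      have "T = M cl_one T" using TC by simp
      thus ?thesis using TQ True oneu unfolding cl_P_def Q_def by auto
    next
      case False thus ?thesis using TQ by (auto simp: Q_def Qodd_def cl_P_def)
    qed
  qed
  have PG: "cl_P n sig \<subseteq> cl_Gamma n sig j" if "j < 2" for j using P_sub_Gamma that by blast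
  have e0: "cl_P n sig = cl_Gamma n sig 0" and e1: "cl_P n sig = cl_Gamma n sig 1"
    and eQ: "cl_P n sig = Q"
    using GQ[of 0] GQ[of 1] QP PG[of 0] PG[of 1] by auto
  have ev: "even n \<longrightarrow> cl_P n sig = cl_units n sig (cl_par n 0) \<union> cl_units n sig (cl_par n 1)"
    using eQ by (simp add: Q_def)
  have od: "odd n \<longrightarrow> cl_P n sig = {cl_mult n sig W T | W T.
          W \<in> cl_units n sig (cl_center n sig) \<and> T \<in> cl_units n sig (cl_par n 0)}"
    using eQ by (simp add: Q_def Qodd_def)
  show ?thesis unfolding cl_thm_concl_def using e0 e1 ev od by blast
qed

end

lemma clf_pq: "clf (sig_pq p)" by unfold_locales (simp add: sig_pq_def)
lemma clf_c: "clf (\<lambda>_. (1::complex))" by unfold_locales simp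

theorem mainTheorem4:
  fixes n :: nat
  assumes "n \<ge> 2"
  shows "(\<forall>p q. p + q = n \<longrightarrow> cl_thm_concl n (sig_pq p))
       \<and> cl_thm_concl n (\<lambda>_. (1::complex))"
  using clf.concl[OF clf_pq] clf.concl[OF clf_c] assms by simp



end
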